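(* Consider the following random variables, all mutually independent. For $i\in\{0,1,2\}$, $\gamma_i=P|h_i|^2$ where $P>0$ and $h_i\sim\mathcal{CN}(0,\Omega_i)$ with $\Omega_i>0$, so $\gamma_i$ is exponential with mean $\bar\gamma_i=P\Omega_i$. For $N\in\{T_1,R\}$, $\Gamma_N=\sum_{k=1}^{L_N}P_{I,N}|c_{N,k}|^2$ with integers $L_N\ge 1$, $P_{I,N}>0$ and $c_{N,k}\sim\mathcal{CN}(0,\Omega_{N,k})$, $\Omega_{N,k}>0$. Put $\xi_{N,k}=P_{I,N}\Omega_{N,k}$ and assume that for each $N$ the numbers $\xi_{N,1},\dots,\xi_{N,L_N}$ are pairwise distinct. Let $\phi_{N,k}=\xi_{N,k}^{L_N-2}\prod_{i=1,i\neq k}^{L_N}\frac{1}{\xi_{N,k}-\xi_{N,i}}$ (so that $\phi_{N,1}=1/\xi_{N,1}$ when $L_N=1$), i.e. the coefficients for which the density of $\Gamma_N$ is $\sum_{k}\phi_{N,k}e^{-t/\xi_{N,k}}$, $t\ge0$. Let $\omega_1,\omega_2\in(0,1)$ with $\omega_1+\omega_2=1$, and define $$\Upsilon_{T_1}^{\rm UB}=\frac{\gamma_0}{\Gamma_{T_1}+1}+\min\left\{\frac{\gamma_1}{\Gamma_{T_1}+1},\ \frac{\omega_2\gamma_2}{\Gamma_R+\omega_1\Gamma_{T_1}+\omega_1+1}\right\},$$ with CDF $F(\gamma)=\Pr(\Upsilon_{T_1}^{\rm UB}<\gamma)$. Let $\lambda_1=\frac{1}{\bar\gamma_1}+\frac{\omega_1}{\omega_2\bar\gamma_2}$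 and $\lambda_2=\frac{1}{\bar\gamma_1}+\frac{\omega_1+1}{\omega_2\bar\gamma_2}$. Then, as $\gamma\to0^+$, $F(\gamma)=K\gamma^2+o(\gamma^2)$, where $$K=\frac{1}{2\bar\gamma_0}\left(\sum_{j=1}^{L_{T_1}}\sum_{k=1}^{L_R}\phi_{T_1,j}\phi_{R,k}\frac{\xi_{R,k}^2}{\omega_2\bar\gamma_2}\left(\xi_{T_1,j}+\xi_{T_1,j}^2\right)+\sum_{j=1}^{L_{T_1}}\phi_{T_1,j}\left(\lambda_2\xi_{T_1,j}+(\lambda_1+\lambda_2)\xi_{T_1,j}^2+2\lambda_1\xi_{T_1,j}^3\right)\right).$$
   Context: This is the model of a three-phase amplify-and-forward two-way relay network with terminals $T_1,T_2$ and relay $R$ under co-channel interference: $h_0,h_1,h_2$ are the $T_1$–$T_2$, $T_1$–$R$, $T_2$–$R$ channel coefficients, $P$ is the common transmit power, $\Gamma_N$ is the total instantaneous interference power at node $N$ (from $L_N$ interferers of power $P_{I,N}$), and $\omega_1,\omega_2$ are the relay's power-allocation coefficients. $\Upsilon_{T_1}^{\rm UB}$ is an upper bound on the received SINR at $T_1$. $o(\gamma^2)$ denotes a quantity $g(\gamma)$ with $g(\gamma)/\gamma^2\to0$. *)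

theory Defs
  imports "HOL-Probability.Probability" "HOL-Library.Landau_Symbols"
begin

text \<open>Indices of the mutually independent random variables:
  G0, G1, G2 are the SNR variables gamma_0, gamma_1, gamma_2;
  ITk k is the k-th interferer power P_{I,T1} |c_{T1,k}|^2 at T1;
  IRk k is the k-th interferer power P_{I,R} |c_{R,k}|^2 at R.\<close>
datatype rv = G0 | G1 | G2 | ITk nat | IRk nat

text \<open>phi_{N,k} = xi_k^(L-2) * prod_{i in 1..L, i ~= k} 1/(xi_k - xi_i), with integer
  exponent so that L = 1 gives 1/xi_1.\<close>
definition phi :: "(nat \<Rightarrow> real) \<Rightarrow> nat \<Rightarrow> nat \<Rightarrow> real" where
  "phi xi L k = xi k powi (int L - 2) * (\<Prod>i\<in>{1..L} - {k}. 1 / (xi k - xi i))"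

end

theory Submission
  imports Defs
begin


lemma (in prob_space) cond_integral:
  fixes Y Z :: "'a \<Rightarrow> 'b" and h :: "'b \<Rightarrow> 'b \<Rightarrow> real"
  assumes ind: "indep_var NY Y N Z"
    and hm[measurable]: "(\<lambda>(y,z). h y z) \<in> borel_measurable (NY \<Otimes>\<^sub>M N)"
    and hb: "\<And>y z. \<bar>h y z\<bar> \<le> B"
    and gm[measurable]: "g \<in> borel_measurable N"
    and Pm[measurable]: "Measurable.pred N Q"
    and geq: "\<And>z. z \<in> space N \<Longrightarrow> Q z \<Longrightarrow> (\<integral>y. h y z \<partial>distr M NY Y) = g z"
    and AES: "AE \<omega> in M. Q (Z \<omega>)"
  shows "(\<integral>\<omega>. h (Y \<omega>) (Z \<omega>) \<partial>M) = (\<integral>\<omega>. g (Z \<omega>) \<partial>M)"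
proof -
  have rvY[measurable]: "random_variable NY Y" using ind by (rule indep_var_rv1)
  have rvZ[measurable]: "random_variable N Z" using ind by (rule indep_var_rv2)
  interpret PY: prob_space "distr M NY Y" by (rule prob_space_distr) simp
  interpret PZ: prob_space "distr M N Z" by (rule prob_space_distr) simp
  interpret PP: pair_prob_space "distr M NY Y" "distr M N Z" ..
  have eq: "distr M NY Y \<Otimes>\<^sub>M distr M N Z = distr M (NY \<Otimes>\<^sub>M N) (\<lambda>x. (Y x, Z x))"
    using ind indep_var_distribution_eq by blast
  have sets_eq: "sets (distr M NY Y \<Otimes>\<^sub>M distr M N Z) = sets (NY \<Otimes>\<^sub>M N)"
    by (intro sets_pair_measure_cong) auto
  have int: "integrable (distr M NY Y \<Otimes>\<^sub>M distr M N Z) (\<lambda>(y,z). h y z)"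
  proof (rule PP.P.integrable_const_bound[where B=B])
    show "(\<lambda>(y,z). h y z) \<in> borel_measurable (distr M NY Y \<Otimes>\<^sub>M distr M N Z)"
      using hm measurable_cong_sets[OF sets_eq refl] by blast
  qed (use hb in auto)
  have "(\<integral>\<omega>. h (Y \<omega>) (Z \<omega>) \<partial>M) = integral\<^sup>L (distr M (NY \<Otimes>\<^sub>M N) (\<lambda>x. (Y x, Z x))) (\<lambda>(y,z). h y z)"
    by (subst integral_distr) auto
  also have "\<dots> = integral\<^sup>L (distr M NY Y \<Otimes>\<^sub>M distr M N Z) (\<lambda>(y,z). h y z)"
    by (simp add: eq)
  also have "\<dots> = (\<integral>z. (\<integral>y. h y z \<partial>distr M NY Y) \<partial>distr M N Z)"
    using PP.integral_snd[OF int] by simp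
  also have "\<dots> = (\<integral>z. g z \<partial>distr M N Z)"
  proof (rule integral_cong_AE)
    show "(\<lambda>z. \<integral>y. h y z \<partial>distr M NY Y) \<in> borel_measurable (distr M N Z)"
      using PP.integrable_snd[OF int] by (rule borel_measurable_integrable)
    show "g \<in> borel_measurable (distr M N Z)" by simp
    have "AE z in distr M N Z. Q z"
      using AES by (subst AE_distr_iff) auto
    then show "AE z in distr M N Z. (\<integral>y. h y z \<partial>distr M NY Y) = g z"
      by (rule AE_mp) (auto intro!: AE_I2 geq)
  qed
  also have "\<dots> = (\<integral>\<omega>. g (Z \<omega>) \<partial>M)"
    by (subst integral_distr) auto
  finally show ?thesis .
qed

lemma (in prob_space) exp_AE_nonneg:
  assumes D: "distributed M lborel Y (exponential_density l)"
  shows "AE \<omega> in M. 0 \<le> Y \<omega>"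
  by (subst distributed_AE2[OF D]) (auto simp: exponential_density_def)

lemma (in prob_space) exp_prob_ge:
  assumes D: "distributed M lborel Y (exponential_density l)" and l: "0 < l"
  shows "prob {\<omega>\<in>space M. s \<le> Y \<omega>} = exp (- max s 0 * l)"
proof -
  have [measurable]: "Y \<in> borel_measurable M"
    using D by (simp add: exponential_distributed_iff[OF l])
  show ?thesis
  proof (cases "s \<le> 0")
    case True
    have "AE \<omega> in M. s \<le> Y \<omega>"
      using exp_AE_nonneg[OF D] by eventually_elim (use True in auto)
    then have "prob {\<omega>\<in>space M. s \<le> Y \<omega>} = 1"
      by (subst prob_Collect_eq_1) auto
    then show ?thesis using True by simp
  next
    case False
    have ne: "AE \<omega> in M. Y \<omega> \<noteq> s"
      by (subst distributed_AE2[OF D]) (auto intro: AE_mp[OF AE_lborel_singleton[of s]])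
    have "prob {\<omega>\<in>space M. s \<le> Y \<omega>} = prob {\<omega>\<in>space M. s < Y \<omega>}"
      by (rule finite_measure_eq_AE) (use ne in \<open>auto elim!: AE_mp\<close>)
    also have "\<dots> = exp (- s * l)"
      using exponential_distributedD_gt[OF D _ l, of s] False by simp
    finally show ?thesis using False by simp
  qed
qed

lemma exp_neg_quad: assumes "0 \<le> (x::real)" shows "exp (- x) \<le> 1 - x + x^2/2"
proof -
  let ?f = "\<lambda>x::real. 1 - x + x^2/2 - exp (- x)"
  have d: "\<And>x. (?f has_real_derivative (- 1 + x + exp (- x))) (at x)"
    by (auto intro!: derivative_eq_intros simp: power2_eq_square algebra_simps)
  have "?f 0 \<le> ?f x"
  proof (rule DERIV_nonneg_imp_increasing_open[of 0 x ?f])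
    fix y assume "0 < y" "y < x"
    show "\<exists>y'. (?f has_real_derivative y') (at y) \<and> 0 \<le> y'"
      using d[of y] exp_ge_add_one_self[of "-y"] by (intro exI[of _ "- 1 + y + exp (- y)"]) auto
  next
    show "continuous_on {0..x} ?f" by (intro continuous_intros) auto
  qed (use assms in auto)
  then show ?thesis using assms by (cases "x = 0") auto
qed

lemma poly_integral:
  fixes c0 c1 c2 L :: real
  assumes "0 \<le> L"
  shows "(\<integral>v. (c0 + c1 * v + c2 * v^2) * indicator {0..L} v \<partial>lborel) = c0 * L + c1 * L^2/2 + c2 * L^3/3"
proof -
  have "(\<integral>v. (c0 + c1 * v + c2 * v^2) * indicator {0..L} v \<partial>lborel)
      = (\<lambda>v. c0 * v + c1 * v^2/2 + c2 * v^3/3) L - (\<lambda>v. c0 * v + c1 * v^2/2 + c2 * v^3/3) 0"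
    by (rule integral_FTC_Icc_real) (use assms in \<open>auto intro!: derivative_eq_intros continuous_intros simp: power2_eq_square power3_eq_cube algebra_simps\<close>)
  then show ?thesis by simp
qed

lemma q_pointwise:
  fixes s b gb0 \<gamma> v :: real
  assumes s: "0 < s" and b: "0 \<le> b" and g: "0 < gb0" and v: "0 \<le> v" "v \<le> s * \<gamma>"
  shows "(1/gb0) * exp (- v/gb0) * (1 - exp (- (b * (\<gamma> - v/s)))) \<le> (1/gb0) * (b * (\<gamma> - v/s))"
    and "(1/gb0) * ((b * (\<gamma> - v/s)) - (b * (\<gamma> - v/s))^2/2 - (v/gb0) * (b * (\<gamma> - v/s)))
         \<le> (1/gb0) * exp (- v/gb0) * (1 - exp (- (b * (\<gamma> - v/s))))"
proof -
  define x where "x = b * (\<gamma> - v/s)"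
  have t: "0 \<le> \<gamma> - v/s" using v s by (simp add: field_simps)
  have x0: "0 \<le> x" unfolding x_def using b t by simp
  have h1: "x - x^2/2 \<le> 1 - exp (- x)" using exp_neg_quad[OF x0] by simp
  have h2: "1 - v/gb0 \<le> exp (- v/gb0)" using exp_ge_add_one_self[of "- v/gb0"] by simp
  have h3: "1 - exp (- x) \<le> x" using exp_ge_add_one_self[of "- x"] by simp
  have h4: "0 \<le> 1 - exp (- x)" using x0 by simp
  have h5: "exp (- v/gb0) \<le> 1" using v g by simp
  have u: "exp (- v/gb0) * (1 - exp (- x)) \<le> x"
    using mult_mono[OF h5 h3] h4 x0 by simp
  have "(1 - v/gb0) * (1 - exp (- x)) \<le> exp (- v/gb0) * (1 - exp (- x))"
    by (rule mult_right_mono[OF h2 h4])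
  moreover have "(v/gb0) * (1 - exp (- x)) \<le> (v/gb0) * x"
    by (rule mult_left_mono[OF h3]) (use v g in simp)
  ultimately have l: "x - x^2/2 - (v/gb0) * x \<le> exp (- v/gb0) * (1 - exp (- x))"
    using h1 by (simp add: algebra_simps)
  show "(1/gb0) * exp (- v/gb0) * (1 - exp (- (b * (\<gamma> - v/s)))) \<le> (1/gb0) * (b * (\<gamma> - v/s))"
    using mult_left_mono[OF u, of "1/gb0"] g unfolding x_def by (simp add: mult.assoc)
  show "(1/gb0) * ((b * (\<gamma> - v/s)) - (b * (\<gamma> - v/s))^2/2 - (v/gb0) * (b * (\<gamma> - v/s)))
         \<le> (1/gb0) * exp (- v/gb0) * (1 - exp (- (b * (\<gamma> - v/s))))"
    using mult_left_mono[OF l, of "1/gb0"] g unfolding x_def by (simp add: mult.assoc)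
qed

lemma qbound:
  fixes s b gb0 \<gamma> :: real
  assumes s: "0 < s" and b: "0 \<le> b" and g: "0 < gb0" and gam: "0 \<le> \<gamma>"
  defines "q \<equiv> \<integral>v. exponential_density (1/gb0) v * (1 - exp (- max (\<gamma> - v/s) 0 * b)) \<partial>lborel"
  shows "s/gb0 * b * \<gamma>^2/2 - s/gb0 * b * (s/gb0 + b) * \<gamma>^3/6 \<le> q"
    and "q \<le> s/gb0 * b * \<gamma>^2/2"
    and "0 \<le> q"
proof -
  define L where "L = s * \<gamma>"
  have L0: "0 \<le> L" using s gam by (simp add: L_def)
  define f where "f v = (1/gb0) * exp (- v/gb0) * (1 - exp (- (b * (\<gamma> - v/s))))" for v
  have eq: "exponential_density (1/gb0) v * (1 - exp (- max (\<gamma> - v/s) 0 * b)) = f v * indicator {0..L} v" for v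
  proof (cases "v < 0")
    case True then show ?thesis by (simp add: exponential_density_def)
  next
    case False
    show ?thesis
    proof (cases "v \<le> L")
      case True
      then have "v/s \<le> \<gamma>" using s by (simp add: L_def field_simps)
      then show ?thesis using False True
        by (simp add: exponential_density_def f_def max_def mult.commute)
    next
      case F2: False
      then have "\<gamma> < v/s" using s by (simp add: L_def field_simps)
      then show ?thesis using False F2 by (simp add: exponential_density_def max_def)
    qed
  qed
  have qeq: "q = (\<integral>v. f v * indicator {0..L} v \<partial>lborel)"
    unfolding q_def eq ..
  have intf: "integrable lborel (\<lambda>v. f v * indicator {0..L} v)"
    by (rule borel_integrable_atLeastAtMost) (use s g in \<open>auto simp: f_def intro!: continuous_intros\<close>)
  have intp: "integrable lborel (\<lambda>v. (c0 + c1 * v + c2 * v^2) * indicator {0..L} v)" for c0 c1 c2 :: real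
    by (rule borel_integrable_atLeastAtMost) (auto intro!: continuous_intros)
  define c0 where "c0 = b * \<gamma> / gb0"
  define c1 where "c1 = - b / (s * gb0)"
  have up: "f v * indicator {0..L} v \<le> (c0 + c1 * v + 0 * v^2) * indicator {0..L} v" for v
  proof (cases "v \<in> {0..L}")
    case True
    then have "f v \<le> (1/gb0) * (b * (\<gamma> - v/s))"
      unfolding f_def using q_pointwise(1)[OF s b g, of v \<gamma>] by (auto simp: L_def)
    also have "\<dots> = c0 + c1 * v + 0 * v^2" using s g by (simp add: c0_def c1_def field_simps)
    finally show ?thesis using True by simp
  qed simp
  have "q \<le> (\<integral>v. (c0 + c1 * v + 0 * v^2) * indicator {0..L} v \<partial>lborel)"
    unfolding qeq by (rule integral_mono[OF intf intp]) (use up in auto)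
  also have "\<dots> = c0 * L + c1 * L^2/2 + 0 * L^3/3" by (rule poly_integral[OF L0])
  also have "\<dots> = s/gb0 * b * \<gamma>^2/2" using s g by (simp add: c0_def c1_def L_def field_simps power2_eq_square)
  finally show "q \<le> s/gb0 * b * \<gamma>^2/2" .
  define d0 where "d0 = (b * \<gamma> - b^2 * \<gamma>^2 / 2) / gb0"
  define d1 where "d1 = (- b / s + b^2 * \<gamma> / s - b * \<gamma> / gb0) / gb0"
  define d2 where "d2 = (- (b^2) / (2 * s^2) + b / (gb0 * s)) / gb0"
  have lo: "(d0 + d1 * v + d2 * v^2) * indicator {0..L} v \<le> f v * indicator {0..L} v" for v
  proof (cases "v \<in> {0..L}")
    case True
    have "d0 + d1 * v + d2 * v^2 = (1/gb0) * ((b * (\<gamma> - v/s)) - (b * (\<gamma> - v/s))^2/2 - (v/gb0) * (b * (\<gamma> - v/s)))"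
      using s g by (simp add: d0_def d1_def d2_def field_simps power2_eq_square)
    also have "\<dots> \<le> f v"
      unfolding f_def using q_pointwise(2)[OF s b g, of v \<gamma>] True by (auto simp: L_def)
    finally show ?thesis using True by simp
  qed simp
  have "d0 * L + d1 * L^2/2 + d2 * L^3/3 = (\<integral>v. (d0 + d1 * v + d2 * v^2) * indicator {0..L} v \<partial>lborel)"
    by (rule poly_integral[OF L0, symmetric])
  also have "\<dots> \<le> q"
    unfolding qeq by (rule integral_mono[OF intp intf]) (use lo in auto)
  finally have "d0 * L + d1 * L^2/2 + d2 * L^3/3 \<le> q" .
  moreover have "d0 * L + d1 * L^2/2 + d2 * L^3/3 = s/gb0 * b * \<gamma>^2/2 - s/gb0 * b * (s/gb0 + b) * \<gamma>^3/6"
    using s g by (simp add: d0_def d1_def d2_def L_def field_simps power2_eq_square power3_eq_cube)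
  ultimately show "s/gb0 * b * \<gamma>^2/2 - s/gb0 * b * (s/gb0 + b) * \<gamma>^3/6 \<le> q" by simp
  have "0 \<le> f v * indicator {0..L} v" for v
  proof (cases "v \<in> {0..L}")
    case True
    then have "v/s \<le> \<gamma>" using s by (simp add: L_def field_simps)
    then have "0 \<le> b * (\<gamma> - v/s)" using b by simp
    then have "exp (- (b * (\<gamma> - v/s))) \<le> 1" by simp
    then show ?thesis using True g by (simp add: f_def)
  qed simp
  then show "0 \<le> q" unfolding qeq by (simp add: integral_nonneg)
qed



definition DD :: "(nat \<Rightarrow> real) \<Rightarrow> nat set \<Rightarrow> nat \<Rightarrow> real" where
  "DD x A m = (\<Sum>j\<in>A. x j ^ m / (\<Prod>i\<in>A - {j}. (x j - x i)))"

lemma DD_rec: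
  assumes A: "finite A" and inj: "inj_on x A" and a: "a \<in> A"
  shows "DD x A (Suc m) = x a * DD x A m + DD x (A - {a}) m"
proof -
  have "DD x A (Suc m) - x a * DD x A m = (\<Sum>j\<in>A. x j ^ m * (x j - x a) / (\<Prod>i\<in>A - {j}. (x j - x i)))"
    unfolding DD_def sum_distrib_left sum_subtractf[symmetric]
    by (intro sum.cong) (auto simp: diff_divide_distrib[symmetric] right_diff_distrib algebra_simps)
  also have "\<dots> = (\<Sum>j\<in>A - {a}. x j ^ m * (x j - x a) / (\<Prod>i\<in>A - {j}. (x j - x i)))"
    using A a by (subst sum.remove[of _ a]) auto
  also have "\<dots> = DD x (A - {a}) m"
    unfolding DD_def
  proof (intro sum.cong refl)
    fix j assume j: "j \<in> A - {a}"
    then have ne: "x j - x a \<noteq> 0" using inj a by (auto dest: inj_onD)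
    have "A - {j} = insert a (A - {a} - {j})" using j a by auto
    then have "(\<Prod>i\<in>A - {j}. (x j - x i)) = (x j - x a) * (\<Prod>i\<in>A - {a} - {j}. (x j - x i))"
      using A by simp
    then show "x j ^ m * (x j - x a) / (\<Prod>i\<in>A - {j}. (x j - x i)) = x j ^ m / (\<Prod>i\<in>A - {a} - {j}. (x j - x i))"
      using ne by simp
  qed
  finally show ?thesis by simp
qed

lemma DD_props:
  assumes "finite A" "A \<noteq> {}" "inj_on x A"
  shows "(\<forall>m. m + 2 \<le> card A \<longrightarrow> DD x A m = 0) \<and> DD x A (card A - 1) = 1 \<and> DD x A (card A) = sum x A
         \<and> DD x A (card A + 1) = ((sum x A)^2 + (\<Sum>i\<in>A. x i ^ 2)) / 2"
  using assms
proof (induction "card A" arbitrary: A rule: less_induct)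
  case less
  note A = less.prems
  show ?case
  proof (cases "card A = 1")
    case True
    then obtain a where "A = {a}" using card_1_singletonE by blast
    then show ?thesis by (simp add: DD_def power2_eq_square)
  next
    case False
    have "card A > 0" using A by auto
    then have c2: "card A \<ge> 2" using False by linarith
    obtain a where a: "a \<in> A" using A by blast
    have "\<exists>b\<in>A. b \<noteq> a"
    proof (rule ccontr)
      assume "\<not> ?thesis" then have "A = {a}" using a by blast
      then show False using c2 by simp
    qed
    then obtain b where b: "b \<in> A" "b \<noteq> a" by blast
    define n where "n = card A - 1"
    have cA: "card A = Suc n" using c2 by (simp add: n_def)
    have cB: "card (A - {a}) = n" and cC: "card (A - {b}) = n" using A a b cA by auto
    have PB: "(\<forall>m. m + 2 \<le> n \<longrightarrow> DD x (A - {a}) m = 0) \<and> DD x (A - {a}) (n - 1) = 1 \<and> DD x (A - {a}) n = sum x (A - {a})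
         \<and> DD x (A - {a}) (n + 1) = ((sum x (A - {a}))^2 + (\<Sum>i\<in>A - {a}. x i ^ 2)) / 2"
    proof -
      have i: "inj_on x (A - {a})" using A(3) by (rule inj_on_subset) auto
      have "A - {a} \<noteq> {}" using b by auto
      from less.hyps[OF _ _ this i] show ?thesis using A(1) cA cB by simp
    qed
    have PC: "(\<forall>m. m + 2 \<le> n \<longrightarrow> DD x (A - {b}) m = 0) \<and> DD x (A - {b}) (n - 1) = 1"
    proof -
      have i: "inj_on x (A - {b})" using A(3) by (rule inj_on_subset) auto
      have "A - {b} \<noteq> {}" using a b by auto
      from less.hyps[OF _ _ this i] show ?thesis using A(1) cA cC by simp
    qed
    have n1: "n \<ge> 1" using c2 cA by simp
    have BC: "DD x (A - {a}) m = DD x (A - {b}) m" if "m + 1 \<le> n" for m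
    proof (cases "m + 2 \<le> n")
      case True then show ?thesis using PB PC by simp
    next
      case False then have "m = n - 1" using that by simp
      then show ?thesis using PB PC by simp
    qed
    have zero: "DD x A m = 0" if "m + 1 \<le> n" for m
    proof -
      have "x a * DD x A m + DD x (A - {a}) m = x b * DD x A m + DD x (A - {b}) m"
        using DD_rec[OF A(1) A(3) a, of m] DD_rec[OF A(1) A(3) b(1), of m] by simp
      then have "(x a - x b) * DD x A m = 0" using BC[OF that] by (simp add: algebra_simps)
      moreover have "x a \<noteq> x b" using inj_onD[OF A(3) _ a b(1)] b(2) by metis
      ultimately show ?thesis by simp
    qed
    have d1: "DD x A n = 1"
    proof -
      have "DD x A (Suc (n - 1)) = x a * DD x A (n - 1) + DD x (A - {a}) (n - 1)"
        by (rule DD_rec[OF A(1) A(3) a])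
      then show ?thesis using zero[of "n - 1"] PB n1 by simp
    qed
    have d2: "DD x A (Suc n) = sum x A"
      using DD_rec[OF A(1) A(3) a, of n] d1 PB sum.remove[OF A(1) a, of x] by simp
    have d3: "DD x A (Suc (Suc n)) = ((sum x A)^2 + (\<Sum>i\<in>A. x i ^ 2)) / 2"
    proof -
      have s1: "sum x (A - {a}) = sum x A - x a" using sum.remove[OF A(1) a, of x] by simp
      have s2: "(\<Sum>i\<in>A - {a}. x i ^ 2) = (\<Sum>i\<in>A. x i ^ 2) - x a ^ 2"
        using sum.remove[OF A(1) a, of "\<lambda>i. x i ^ 2"] by simp
      have "DD x A (Suc (Suc n)) = x a * sum x A + DD x (A - {a}) (n + 1)"
        using DD_rec[OF A(1) A(3) a, of "Suc n"] d2 by simp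
      also have "\<dots> = ((sum x A)^2 + (\<Sum>i\<in>A. x i ^ 2)) / 2"
      proof -
        have "DD x (A - {a}) (n + 1) = ((sum x A - x a)^2 + ((\<Sum>i\<in>A. x i ^ 2) - x a ^ 2)) / 2"
          using PB s1 s2 by simp
        then show ?thesis by (simp add: power2_eq_square algebra_simps add_divide_distrib diff_divide_distrib)
      qed
      finally show ?thesis .
    qed
    show ?thesis
    proof (intro conjI allI impI)
      fix m assume "m + 2 \<le> card A" then show "DD x A m = 0" using zero cA by simp
    next
      show "DD x A (card A - 1) = 1" using d1 cA by simp
      show "DD x A (card A) = sum x A" using d2 cA by simp
      show "DD x A (card A + 1) = ((sum x A)^2 + (\<Sum>i\<in>A. x i ^ 2)) / 2" using d3 cA by simp
    qed
  qed
qed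

lemma powi_shift:
  fixes x :: real
  assumes "x \<noteq> 0" "1 \<le> L" "1 \<le> p"
  shows "x powi (int L - 2) * x ^ p = x ^ (L + p - 2)"
proof -
  have "x powi (int L - 2) * x ^ p = x powi (int L - 2) * x powi (int p)"
    by (simp add: power_int_of_nat)
  also have "\<dots> = x powi (int L - 2 + int p)"
    using assms(1) by (simp add: power_int_add)
  also have "int L - 2 + int p = int (L + p - 2)" using assms by simp
  also have "x powi int (L + p - 2) = x ^ (L + p - 2)" by (simp add: power_int_of_nat)
  finally show ?thesis .
qed

lemma phi_sum:
  assumes L: "1 \<le> L" and pos: "\<forall>k\<in>{1..L}. 0 < xi k" and inj: "inj_on xi {1..L}" and p: "1 \<le> p"
  shows "(\<Sum>k\<in>{1..L}. phi xi L k * xi k ^ p) = DD xi {1..L} (L + p - 2)"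
  unfolding DD_def
proof (intro sum.cong refl)
  fix k assume k: "k \<in> {1..L}"
  have "phi xi L k * xi k ^ p = (xi k powi (int L - 2) * xi k ^ p) * (\<Prod>i\<in>{1..L} - {k}. 1 / (xi k - xi i))"
    by (simp add: phi_def)
  also have "\<dots> = xi k ^ (L + p - 2) / (\<Prod>i\<in>{1..L} - {k}. (xi k - xi i))"
  proof -
    have ne: "xi k \<noteq> 0" using pos k by (metis less_irrefl)
    have "(\<Prod>i\<in>{1..L} - {k}. 1 / (xi k - xi i)) = 1 / (\<Prod>i\<in>{1..L} - {k}. (xi k - xi i))"
      by (simp add: prod_dividef)
    then show ?thesis using powi_shift[OF ne L p] by simp
  qed
  finally show "phi xi L k * xi k ^ p = xi k ^ (L + p - 2) / (\<Prod>i\<in>{1..L} - {k}. (xi k - xi i))" .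
qed

lemma phi_moments:
  assumes L: "1 \<le> L" and pos: "\<forall>k\<in>{1..L}. 0 < xi k" and inj: "inj_on xi {1..L}"
  shows "(\<Sum>k\<in>{1..L}. phi xi L k * xi k) = 1"
    and "(\<Sum>k\<in>{1..L}. phi xi L k * xi k ^ 2) = (\<Sum>k\<in>{1..L}. xi k)"
    and "(\<Sum>k\<in>{1..L}. phi xi L k * xi k ^ 3) = ((\<Sum>k\<in>{1..L}. xi k)^2 + (\<Sum>k\<in>{1..L}. xi k ^ 2)) / 2"
proof -
  have P: "(\<forall>m. m + 2 \<le> card {1..L} \<longrightarrow> DD xi {1..L} m = 0) \<and> DD xi {1..L} (card {1..L} - 1) = 1 \<and> DD xi {1..L} (card {1..L}) = sum xi {1..L}
         \<and> DD xi {1..L} (card {1..L} + 1) = ((sum xi {1..L})^2 + (\<Sum>i\<in>{1..L}. xi i ^ 2)) / 2"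
    using L inj by (intro DD_props) auto
  show "(\<Sum>k\<in>{1..L}. phi xi L k * xi k) = 1"
    using phi_sum[OF L pos inj, of 1] P L by simp
  show "(\<Sum>k\<in>{1..L}. phi xi L k * xi k ^ 2) = (\<Sum>k\<in>{1..L}. xi k)"
    using phi_sum[OF L pos inj, of 2] P L by simp
  show "(\<Sum>k\<in>{1..L}. phi xi L k * xi k ^ 3) = ((\<Sum>k\<in>{1..L}. xi k)^2 + (\<Sum>k\<in>{1..L}. xi k ^ 2)) / 2"
    using phi_sum[OF L pos inj, of 3] P L by simp
qed



lemma (in prob_space) integral_if_prob:
  assumes "{\<omega>\<in>space M. P \<omega>} \<in> events"
  shows "(\<integral>\<omega>. (if P \<omega> then 1 else 0) \<partial>M) = prob {\<omega>\<in>space M. P \<omega>}"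
proof -
  have "(\<integral>\<omega>. (if P \<omega> then 1 else 0) \<partial>M) = (\<integral>\<omega>. indicator {\<omega>\<in>space M. P \<omega>} \<omega> \<partial>M)"
    by (rule Bochner_Integration.integral_cong) (auto simp: indicator_def)
  also have "\<dots> = prob {\<omega>\<in>space M. P \<omega>}" using assms by simp
  finally show ?thesis .
qed

lemma (in prob_space) indep_pair:
  assumes ind: "indep_vars (\<lambda>_. borel) X I" and "a \<in> I" "b \<in> I" "a \<noteq> b"
  shows "indep_var borel (X a) borel (X b)"
proof -
  have "indep_var borel ((\<lambda>f. f a) \<circ> (\<lambda>\<omega>. restrict (\<lambda>i. X i \<omega>) {a}))
                  borel ((\<lambda>f. f b) \<circ> (\<lambda>\<omega>. restrict (\<lambda>i. X i \<omega>) {b}))"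
    using assms by (intro indep_var_compose[OF indep_var_restrict[OF ind]]) auto
  also have "((\<lambda>f. f a) \<circ> (\<lambda>\<omega>. restrict (\<lambda>i. X i \<omega>) {a})) = X a" by auto
  also have "((\<lambda>f. f b) \<circ> (\<lambda>\<omega>. restrict (\<lambda>i. X i \<omega>) {b})) = X b" by auto
  finally show ?thesis .
qed

lemma sum_cube_le:
  fixes y :: "'i \<Rightarrow> real"
  assumes S: "finite S" and nn: "\<And>k. k \<in> S \<Longrightarrow> 0 \<le> y k"
  shows "(\<Sum>k\<in>S. y k)^3 \<le> real (card S)^3 * (\<Sum>k\<in>S. y k ^ 3)"
proof (cases "S = {}")
  case True then show ?thesis by simp
next
  case False
  define m where "m = Max (y ` S)"
  have mS: "m \<in> y ` S" unfolding m_def using S False by (intro Max_in) auto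
  then obtain k0 where k0: "k0 \<in> S" "m = y k0" by auto
  have le: "y k \<le> m" if "k \<in> S" for k unfolding m_def using S that by (intro Max_ge) auto
  have m0: "0 \<le> m" using nn k0 by simp
  have "(\<Sum>k\<in>S. y k) \<le> of_nat (card S) * m" by (rule sum_bounded_above) (use le in auto)
  moreover have "0 \<le> (\<Sum>k\<in>S. y k)" using nn by (simp add: sum_nonneg)
  ultimately have "(\<Sum>k\<in>S. y k)^3 \<le> (of_nat (card S) * m)^3" by (intro power_mono) auto
  also have "\<dots> = real (card S)^3 * m^3" by (simp add: power_mult_distrib)
  also have "m^3 \<le> (\<Sum>k\<in>S. y k ^ 3)"
    using k0 S nn by (auto intro!: member_le_sum)
  then have "real (card S)^3 * m^3 \<le> real (card S)^3 * (\<Sum>k\<in>S. y k ^ 3)"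
    by (intro mult_left_mono) auto
  finally show ?thesis .
qed

lemma cube3:
  fixes g r :: real assumes "0 \<le> g" "0 \<le> r"
  shows "(1 + g + r)^3 \<le> 27 * (1 + g^3 + r^3)"
proof -
  define m where "m = max 1 (max g r)"
  have "1 + g + r \<le> 3 * m" unfolding m_def by linarith
  then have "(1 + g + r)^3 \<le> (3 * m)^3" using assms by (intro power_mono) auto
  also have "\<dots> = 27 * m^3" by (simp add: power_mult_distrib)
  also have "m^3 \<le> 1 + g^3 + r^3"
    unfolding m_def using assms by (auto simp: max_def)
  then have "27 * m^3 \<le> 27 * (1 + g^3 + r^3)" by simp
  finally show ?thesis .
qed



lemma (in prob_space) Fq_lemma:
  fixes X :: "rv \<Rightarrow> 'a \<Rightarrow> real" and LT LR :: nat
  assumes ind: "indep_vars (\<lambda>_. borel) X I"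
    and I_def: "I = {G0, G1, G2} \<union> ITk ` {1..LT} \<union> IRk ` {1..LR}"
    and D0: "distributed M lborel (X G0) (exponential_density (1 / gb0))"
    and D1: "distributed M lborel (X G1) (exponential_density (1 / gb1))"
    and D2: "distributed M lborel (X G2) (exponential_density (1 / gb2))"
    and pos: "0 < gb0" "0 < gb1" "0 < gb2" "0 < w1" "0 < w2"
    and AEnn: "AE \<omega> in M. 0 \<le> (\<Sum>k\<in>{1..LT}. X (ITk k) \<omega>) \<and> 0 \<le> (\<Sum>k\<in>{1..LR}. X (IRk k) \<omega>)"
  defines "GTs \<equiv> (\<lambda>x. \<Sum>k\<in>{1..LT}. X (ITk k) x)"
    and "GRs \<equiv> (\<lambda>x. \<Sum>k\<in>{1..LR}. X (IRk k) x)"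
    and "bbp \<equiv> (\<lambda>g r. max 0 ((g + 1) / gb1 + (r + w1 * g + w1 + 1) / (w2 * gb2)))"
  shows "measure M {x \<in> space M. X G0 x / (GTs x + 1)
                   + min (X G1 x / (GTs x + 1))
                         (w2 * X G2 x / (GRs x + w1 * GTs x + w1 + 1)) < \<gamma>}
       = (\<integral>\<omega>. (\<integral>v. exponential_density (1/gb0) v * (1 - exp (- max (\<gamma> - v / (GTs \<omega> + 1)) 0 * bbp (GTs \<omega>) (GRs \<omega>))) \<partial>lborel) \<partial>M)"
proof -
  have rv[measurable]: "X i \<in> borel_measurable M" if "i \<in> I" for i
    using ind that by (auto simp: indep_vars_def)
  have rvs[measurable]: "X G0 \<in> borel_measurable M" "X G1 \<in> borel_measurable M" "X G2 \<in> borel_measurable M"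
    by (auto intro!: rv simp: I_def)
  have mGT[measurable]: "GTs \<in> borel_measurable M" unfolding GTs_def
    by (intro borel_measurable_sum rv) (auto simp: I_def)
  have mGR[measurable]: "GRs \<in> borel_measurable M" unfolding GRs_def
    by (intro borel_measurable_sum rv) (auto simp: I_def)

  define B2 where "B2 = I - {G2}"
  define B1 where "B1 = I - {G1, G2}"
  define J where "J = I - {G0, G1, G2}"
  define gT where "gT = (\<lambda>f::rv \<Rightarrow> real. \<Sum>k\<in>{1..LT}. f (ITk k))"
  define gR where "gR = (\<lambda>f::rv \<Rightarrow> real. \<Sum>k\<in>{1..LR}. f (IRk k))"
  define RV where "RV = (\<lambda>S \<omega>. restrict (\<lambda>i. X i \<omega>) S)"
  have subT: "ITk ` {1..LT} \<subseteq> B2" "ITk ` {1..LT} \<subseteq> B1" "ITk ` {1..LT} \<subseteq> J"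
    and subR: "IRk ` {1..LR} \<subseteq> B2" "IRk ` {1..LR} \<subseteq> B1" "IRk ` {1..LR} \<subseteq> J"
    and memb: "G0 \<in> B2" "G1 \<in> B2" "G0 \<in> B1"
    by (auto simp: B2_def B1_def J_def I_def)
  have gT_RV: "gT (RV S \<omega>) = GTs \<omega>" if "ITk ` {1..LT} \<subseteq> S" for S \<omega>
    using that unfolding gT_def RV_def GTs_def by (intro sum.cong) (auto simp: image_subset_iff)
  have gR_RV: "gR (RV S \<omega>) = GRs \<omega>" if "IRk ` {1..LR} \<subseteq> S" for S \<omega>
    using that unfolding gR_def RV_def GRs_def by (intro sum.cong) (auto simp: image_subset_iff)
  have mgT: "gT \<in> borel_measurable (PiM S (\<lambda>_. borel))" if "ITk ` {1..LT} \<subseteq> S" for S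
    unfolding gT_def using that by (intro borel_measurable_sum measurable_component_singleton) auto
  have mgR: "gR \<in> borel_measurable (PiM S (\<lambda>_. borel))" if "IRk ` {1..LR} \<subseteq> S" for S
    unfolding gR_def using that by (intro borel_measurable_sum measurable_component_singleton) auto
  have mgT'[measurable]: "gT \<in> borel_measurable (PiM B2 (\<lambda>_. borel))" "gT \<in> borel_measurable (PiM B1 (\<lambda>_. borel))"
      "gT \<in> borel_measurable (PiM J (\<lambda>_. borel))"
    using mgT subT by auto
  have mgR'[measurable]: "gR \<in> borel_measurable (PiM B2 (\<lambda>_. borel))" "gR \<in> borel_measurable (PiM B1 (\<lambda>_. borel))"
      "gR \<in> borel_measurable (PiM J (\<lambda>_. borel))"
    using mgR subR by auto
  have mcomp[measurable]: "(\<lambda>f. f G0) \<in> borel_measurable (PiM B2 (\<lambda>_. borel))"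
    "(\<lambda>f. f G1) \<in> borel_measurable (PiM B2 (\<lambda>_. borel))"
    "(\<lambda>f. f G0) \<in> borel_measurable (PiM B1 (\<lambda>_. borel))"
    "(\<lambda>f. f G2) \<in> borel_measurable (PiM {G2} (\<lambda>_. borel))"
    "(\<lambda>f. f G1) \<in> borel_measurable (PiM {G1} (\<lambda>_. borel))"
    "(\<lambda>f. f G0) \<in> borel_measurable (PiM {G0} (\<lambda>_. borel))"
    using memb by (auto intro!: measurable_component_singleton)
  have mRV[measurable]: "RV S \<in> measurable M (PiM S (\<lambda>_. borel))" if "S \<subseteq> I" for S
    unfolding RV_def using that by (intro measurable_restrict rv) auto
  have mRVs[measurable]: "RV {G2} \<in> measurable M (PiM {G2} (\<lambda>_. borel))" "RV B2 \<in> measurable M (PiM B2 (\<lambda>_. borel))"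
    "RV {G1} \<in> measurable M (PiM {G1} (\<lambda>_. borel))" "RV B1 \<in> measurable M (PiM B1 (\<lambda>_. borel))"
    "RV {G0} \<in> measurable M (PiM {G0} (\<lambda>_. borel))" "RV J \<in> measurable M (PiM J (\<lambda>_. borel))"
    by (auto intro!: mRV simp: B2_def B1_def J_def I_def)
  have ind2: "indep_var (PiM {G2} (\<lambda>_. borel)) (RV {G2}) (PiM B2 (\<lambda>_. borel)) (RV B2)"
    unfolding RV_def by (rule indep_var_restrict[OF ind]) (auto simp: B2_def I_def)
  have ind1: "indep_var (PiM {G1} (\<lambda>_. borel)) (RV {G1}) (PiM B1 (\<lambda>_. borel)) (RV B1)"
    unfolding RV_def by (rule indep_var_restrict[OF ind]) (auto simp: B1_def I_def)
  have ind0: "indep_var (PiM {G0} (\<lambda>_. borel)) (RV {G0}) (PiM J (\<lambda>_. borel)) (RV J)"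
    unfolding RV_def by (rule indep_var_restrict[OF ind]) (auto simp: J_def I_def)

  have RV_app: "RV S \<omega> i = X i \<omega>" if "i \<in> S" for S \<omega> i
    using that by (simp add: RV_def)
  have AEQ: "AE \<omega> in M. 0 \<le> GTs \<omega> \<and> 0 \<le> GRs \<omega>"
    using AEnn by (simp add: GTs_def GRs_def)
  have minle: "(\<gamma> \<le> A + min B C) \<longleftrightarrow> (\<gamma> - A \<le> B \<and> \<gamma> - A \<le> C)" for A B C :: real by auto
  define Ups where "Ups = (\<lambda>x. X G0 x / (GTs x + 1)
                   + min (X G1 x / (GTs x + 1))
                         (w2 * X G2 x / (GRs x + w1 * GTs x + w1 + 1)))"
  have mUps[measurable]: "Ups \<in> borel_measurable M" unfolding Ups_def by measurable
  have "{x \<in> space M. Ups x < \<gamma>} = space M - {x \<in> space M. \<gamma> \<le> Ups x}" by auto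
  then have s1: "measure M {x \<in> space M. Ups x < \<gamma>} = 1 - prob {x \<in> space M. \<gamma> \<le> Ups x}"
    by (simp add: prob_compl)
  have s1b: "prob {x \<in> space M. \<gamma> \<le> Ups x} = (\<integral>\<omega>. (if \<gamma> \<le> Ups \<omega> then 1 else 0) \<partial>M)"
    by (rule integral_if_prob[symmetric]) simp
  define h2 where "h2 = (\<lambda>(y::rv\<Rightarrow>real) (z::rv\<Rightarrow>real). if \<gamma> - z G0/(gT z + 1) \<le> z G1/(gT z + 1) \<and>
      \<gamma> - z G0/(gT z + 1) \<le> w2 * y G2 / (gR z + w1 * gT z + w1 + 1) then 1 else (0::real))"
  define g2 where "g2 = (\<lambda>z. if \<gamma> - z G0/(gT z + 1) \<le> z G1/(gT z + 1)
      then exp (- max ((gR z + w1 * gT z + w1 + 1) * (\<gamma> - z G0/(gT z + 1)) / w2) 0 * (1/gb2)) else 0)"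
  have s2a: "(\<integral>\<omega>. (if \<gamma> \<le> Ups \<omega> then 1 else 0) \<partial>M) = (\<integral>\<omega>. h2 (RV {G2} \<omega>) (RV B2 \<omega>) \<partial>M)"
    by (rule Bochner_Integration.integral_cong)
       (auto simp: h2_def Ups_def RV_app memb gT_RV[OF subT(1)] gR_RV[OF subR(1)] minle)
  have s2b: "(\<integral>\<omega>. h2 (RV {G2} \<omega>) (RV B2 \<omega>) \<partial>M) = (\<integral>\<omega>. g2 (RV B2 \<omega>) \<partial>M)"
  proof (rule cond_integral[OF ind2, where B=1 and Q="\<lambda>z. 0 \<le> gT z \<and> 0 \<le> gR z"])
    show "(\<lambda>(y, z). h2 y z) \<in> borel_measurable (PiM {G2} (\<lambda>_. borel) \<Otimes>\<^sub>M PiM B2 (\<lambda>_. borel))"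
      unfolding h2_def by measurable
    show "\<bar>h2 y z\<bar> \<le> 1" for y z by (simp add: h2_def)
    show "g2 \<in> borel_measurable (PiM B2 (\<lambda>_. borel))" unfolding g2_def by measurable
    show "Measurable.pred (PiM B2 (\<lambda>_. borel)) (\<lambda>z. 0 \<le> gT z \<and> 0 \<le> gR z)" by measurable
    show "AE \<omega> in M. 0 \<le> gT (RV B2 \<omega>) \<and> 0 \<le> gR (RV B2 \<omega>)"
      using AEQ by (simp add: gT_RV[OF subT(1)] gR_RV[OF subR(1)])
    fix z assume z: "z \<in> space (PiM B2 (\<lambda>_. borel))" and Qz: "0 \<le> gT z \<and> 0 \<le> gR z"
    define c where "c = gR z + w1 * gT z + w1 + 1"
    define t where "t = \<gamma> - z G0/(gT z + 1)"
    define A where "A = (t \<le> z G1/(gT z + 1))"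
    have c0: "0 < c" using Qz pos unfolding c_def by (simp add: add_nonneg_pos)
    have "(\<integral>y. h2 y z \<partial>distr M (PiM {G2} (\<lambda>_. borel)) (RV {G2})) = (\<integral>\<omega>. h2 (RV {G2} \<omega>) z \<partial>M)"
      by (rule integral_distr) (auto simp: h2_def)
    also have "\<dots> = (\<integral>\<omega>. (if A \<and> c * t / w2 \<le> X G2 \<omega> then 1 else 0) \<partial>M)"
    proof (rule Bochner_Integration.integral_cong[OF refl])
      fix \<omega> 
      have "(t \<le> w2 * X G2 \<omega> / c) = (c * t / w2 \<le> X G2 \<omega>)"
        using c0 pos by (simp add: pos_le_divide_eq pos_divide_le_eq mult.commute)
      then show "h2 (RV {G2} \<omega>) z = (if A \<and> c * t / w2 \<le> X G2 \<omega> then 1 else 0)"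
        by (simp add: h2_def RV_app A_def t_def c_def)
    qed
    also have "\<dots> = (if A then prob {\<omega> \<in> space M. c * t / w2 \<le> X G2 \<omega>} else 0)"
      by (cases A) (simp_all add: integral_if_prob)
    also have "\<dots> = g2 z"
      using exp_prob_ge[OF D2, of "c * t / w2"] pos
      by (simp add: g2_def A_def t_def c_def)
    finally show "(\<integral>y. h2 y z \<partial>distr M (PiM {G2} (\<lambda>_. borel)) (RV {G2})) = g2 z" .
  qed

  define h1 where "h1 = (\<lambda>(y::rv\<Rightarrow>real) (z::rv\<Rightarrow>real). if \<gamma> - z G0/(gT z + 1) \<le> y G1/(gT z + 1)
      then exp (- max ((gR z + w1 * gT z + w1 + 1) * (\<gamma> - z G0/(gT z + 1)) / w2) 0 * (1/gb2)) else 0)"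
  define g1 where "g1 = (\<lambda>z. exp (- max (\<gamma> - z G0/(gT z + 1)) 0 * bbp (gT z) (gR z)))"
  have s3a: "(\<integral>\<omega>. g2 (RV B2 \<omega>) \<partial>M) = (\<integral>\<omega>. h1 (RV {G1} \<omega>) (RV B1 \<omega>) \<partial>M)"
    by (rule Bochner_Integration.integral_cong)
       (auto simp: h1_def g2_def RV_app memb gT_RV[OF subT(1)] gR_RV[OF subR(1)] gT_RV[OF subT(2)] gR_RV[OF subR(2)])
  have s3b: "(\<integral>\<omega>. h1 (RV {G1} \<omega>) (RV B1 \<omega>) \<partial>M) = (\<integral>\<omega>. g1 (RV B1 \<omega>) \<partial>M)"
  proof (rule cond_integral[OF ind1, where B=1 and Q="\<lambda>z. 0 \<le> gT z \<and> 0 \<le> gR z"])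
    show "(\<lambda>(y, z). h1 y z) \<in> borel_measurable (PiM {G1} (\<lambda>_. borel) \<Otimes>\<^sub>M PiM B1 (\<lambda>_. borel))"
      unfolding h1_def by measurable
    show "\<bar>h1 y z\<bar> \<le> 1" for y z using pos by (simp add: h1_def)
    show "g1 \<in> borel_measurable (PiM B1 (\<lambda>_. borel))" unfolding g1_def bbp_def by measurable
    show "Measurable.pred (PiM B1 (\<lambda>_. borel)) (\<lambda>z. 0 \<le> gT z \<and> 0 \<le> gR z)" by measurable
    show "AE \<omega> in M. 0 \<le> gT (RV B1 \<omega>) \<and> 0 \<le> gR (RV B1 \<omega>)"
      using AEQ by (simp add: gT_RV[OF subT(2)] gR_RV[OF subR(2)])
    fix z assume z: "z \<in> space (PiM B1 (\<lambda>_. borel))" and Qz: "0 \<le> gT z \<and> 0 \<le> gR z"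
    define c where "c = gR z + w1 * gT z + w1 + 1"
    define t where "t = \<gamma> - z G0/(gT z + 1)"
    define s where "s = gT z + 1"
    define E where "E = exp (- max (c * t / w2) 0 * (1/gb2))"
    have c0: "0 < c" using Qz pos unfolding c_def by (simp add: add_nonneg_pos)
    have s0: "0 < s" using Qz unfolding s_def by simp
    have "(\<integral>y. h1 y z \<partial>distr M (PiM {G1} (\<lambda>_. borel)) (RV {G1})) = (\<integral>\<omega>. h1 (RV {G1} \<omega>) z \<partial>M)"
      by (rule integral_distr) (auto simp: h1_def)
    also have "\<dots> = (\<integral>\<omega>. E * (if s * t \<le> X G1 \<omega> then 1 else 0) \<partial>M)"
    proof (rule Bochner_Integration.integral_cong[OF refl])
      fix \<omega>
      have "(t \<le> X G1 \<omega> / s) = (s * t \<le> X G1 \<omega>)"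
        using s0 by (simp add: pos_le_divide_eq mult.commute)
      then show "h1 (RV {G1} \<omega>) z = E * (if s * t \<le> X G1 \<omega> then 1 else 0)"
        by (simp add: h1_def RV_app E_def t_def c_def s_def)
    qed
    also have "\<dots> = E * prob {\<omega> \<in> space M. s * t \<le> X G1 \<omega>}"
      by (simp add: integral_if_prob)
    also have "\<dots> = E * exp (- max (s * t) 0 * (1/gb1))"
      using exp_prob_ge[OF D1, of "s * t"] pos by simp
    also have "\<dots> = g1 z"
    proof -
      have bbe: "bbp (gT z) (gR z) = s / gb1 + c / (w2 * gb2)"
        using Qz pos c0 s0 unfolding bbp_def c_def s_def
        by (intro max_absorb2 add_nonneg_nonneg divide_nonneg_pos) auto
      have "max (c * t / w2) 0 * (1/gb2) + max (s * t) 0 * (1/gb1) = max t 0 * (s / gb1 + c / (w2 * gb2))"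
      proof (cases "0 \<le> t")
        case True
        have a: "max (c * t / w2) 0 = c * t / w2" using True c0 pos by (intro max_absorb1) simp
        have b: "max (s * t) 0 = s * t" using True s0 by (intro max_absorb1) simp
        have d: "max t 0 = t" using True by simp
        show ?thesis unfolding a b d using pos by (simp add: field_simps)
      next
        case False
        then have "c * t / w2 < 0" "s * t < 0" using c0 s0 pos
          by (simp_all add: divide_neg_pos mult_pos_neg)
        then show ?thesis using False by simp
      qed
      then show ?thesis
        unfolding E_def g1_def bbe t_def[symmetric] by (simp add: exp_add[symmetric] algebra_simps)
    qed
    finally show "(\<integral>y. h1 y z \<partial>distr M (PiM {G1} (\<lambda>_. borel)) (RV {G1})) = g1 z" .
  qed

  have bbp0: "0 \<le> bbp g r" for g r unfolding bbp_def by simp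
  have g1b: "0 \<le> g1 z \<and> g1 z \<le> 1" for z
    using bbp0[of "gT z" "gR z"] unfolding g1_def by simp
  have intg1: "integrable M (\<lambda>\<omega>. g1 (RV B1 \<omega>))"
  proof (rule integrable_const_bound[where B=1])
    show "AE x in M. norm (g1 (RV B1 x)) \<le> 1" using g1b by simp
    show "(\<lambda>\<omega>. g1 (RV B1 \<omega>)) \<in> borel_measurable M" unfolding g1_def bbp_def by measurable
  qed
  define h0 where "h0 = (\<lambda>(y::rv\<Rightarrow>real) (z::rv\<Rightarrow>real). 1 - exp (- max (\<gamma> - y G0/(gT z + 1)) 0 * bbp (gT z) (gR z)))"
  define g0 where "g0 = (\<lambda>z. \<integral>v. exponential_density (1/gb0) v * (1 - exp (- max (\<gamma> - v/(gT z + 1)) 0 * bbp (gT z) (gR z))) \<partial>lborel)"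
  have s4a: "1 - (\<integral>\<omega>. g1 (RV B1 \<omega>) \<partial>M) = (\<integral>\<omega>. h0 (RV {G0} \<omega>) (RV J \<omega>) \<partial>M)"
  proof -
    have "1 - (\<integral>\<omega>. g1 (RV B1 \<omega>) \<partial>M) = (\<integral>\<omega>. 1 - g1 (RV B1 \<omega>) \<partial>M)"
      using intg1 by (simp add: prob_space)
    also have "\<dots> = (\<integral>\<omega>. h0 (RV {G0} \<omega>) (RV J \<omega>) \<partial>M)"
      by (rule Bochner_Integration.integral_cong)
         (auto simp: h0_def g1_def RV_app memb gT_RV[OF subT(2)] gR_RV[OF subR(2)] gT_RV[OF subT(3)] gR_RV[OF subR(3)])
    finally show ?thesis .
  qed
  have s4b: "(\<integral>\<omega>. h0 (RV {G0} \<omega>) (RV J \<omega>) \<partial>M) = (\<integral>\<omega>. g0 (RV J \<omega>) \<partial>M)"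
  proof (rule cond_integral[OF ind0, where B=1 and Q="\<lambda>z. True"])
    show "(\<lambda>(y, z). h0 y z) \<in> borel_measurable (PiM {G0} (\<lambda>_. borel) \<Otimes>\<^sub>M PiM J (\<lambda>_. borel))"
      unfolding h0_def bbp_def by measurable
    show "\<bar>h0 y z\<bar> \<le> 1" for y z :: "rv \<Rightarrow> real" using bbp0[of "gT z" "gR z"] by (simp add: h0_def)
    show "g0 \<in> borel_measurable (PiM J (\<lambda>_. borel))" unfolding g0_def bbp_def
      by (rule lborel.borel_measurable_lebesgue_integral) measurable
    fix z :: "rv \<Rightarrow> real" assume z: "z \<in> space (PiM J (\<lambda>_. borel))"
    have "(\<integral>y. h0 y z \<partial>distr M (PiM {G0} (\<lambda>_. borel)) (RV {G0})) = (\<integral>\<omega>. h0 (RV {G0} \<omega>) z \<partial>M)"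
      by (rule integral_distr) (auto simp: h0_def bbp_def)
    also have "\<dots> = (\<integral>\<omega>. (\<lambda>v. 1 - exp (- max (\<gamma> - v/(gT z + 1)) 0 * bbp (gT z) (gR z))) (X G0 \<omega>) \<partial>M)"
      by (rule Bochner_Integration.integral_cong) (auto simp: h0_def RV_app)
    also have "\<dots> = g0 z"
      unfolding g0_def
      by (rule distributed_integral[OF D0, symmetric]) (auto simp: bbp_def exponential_density_nonneg pos)
    finally show "(\<integral>y. h0 y z \<partial>distr M (PiM {G0} (\<lambda>_. borel)) (RV {G0})) = g0 z" .
  qed simp_all
  have s4c: "(\<integral>\<omega>. g0 (RV J \<omega>) \<partial>M) = (\<integral>\<omega>. (\<integral>v. exponential_density (1/gb0) v * (1 - exp (- max (\<gamma> - v / (GTs \<omega> + 1)) 0 * bbp (GTs \<omega>) (GRs \<omega>))) \<partial>lborel) \<partial>M)"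
    by (rule Bochner_Integration.integral_cong) (auto simp: g0_def gT_RV[OF subT(3)] gR_RV[OF subR(3)])
  have "measure M {x \<in> space M. Ups x < \<gamma>} = (\<integral>\<omega>. (\<integral>v. exponential_density (1/gb0) v * (1 - exp (- max (\<gamma> - v / (GTs \<omega> + 1)) 0 * bbp (GTs \<omega>) (GRs \<omega>))) \<partial>lborel) \<partial>M)"
    using s1 s1b s2a s2b s3a s3b s4a s4b s4c by simp
  then show ?thesis unfolding Ups_def .
qed



lemma o_from_cubic:
  fixes f :: "real \<Rightarrow> real"
  assumes "\<And>\<gamma>. 0 < \<gamma> \<Longrightarrow> \<bar>f \<gamma>\<bar> \<le> C * \<gamma>^3"
  shows "f \<in> o[at_right 0](\<lambda>\<gamma>. \<gamma>^2)"
proof (rule landau_o.smallI)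
  fix c :: real assume c: "0 < c"
  define b where "b = c / (\<bar>C\<bar> + 1)"
  have b0: "0 < b" using c by (simp add: b_def)
  show "eventually (\<lambda>x. norm (f x) \<le> c * norm (x^2)) (at_right 0)"
  proof (rule eventually_at_rightI[of 0 b])
    show "(0::real) < b" by fact
    fix y :: real assume "y \<in> {0<..<b}"
    then have y: "0 < y" "y < b" by auto
    have "\<bar>f y\<bar> \<le> C * y^3" using assms y by simp
    also have "\<dots> \<le> (\<bar>C\<bar> * y) * y^2" using y by (simp add: power3_eq_cube power2_eq_square mult_right_mono)
    also have "\<dots> \<le> c * y^2"
    proof (rule mult_right_mono)
      have "\<bar>C\<bar> * y \<le> (\<bar>C\<bar> + 1) * y" using y by simp
      also have "\<dots> \<le> (\<bar>C\<bar> + 1) * b" using y by (intro mult_left_mono) auto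
      also have "\<dots> = c" by (simp add: b_def)
      finally show "\<bar>C\<bar> * y \<le> c" .
    qed simp
    finally show "norm (f y) \<le> c * norm (y^2)" by simp
  qed
qed

lemma (in prob_space) exp_moments:
  assumes D: "distributed M lborel Y (exponential_density (1/\<xi>))" and xi: "0 < \<xi>"
  shows "integrable M (\<lambda>\<omega>. Y \<omega> ^ n)" "integrable M Y"
    "expectation Y = \<xi>" "expectation (\<lambda>\<omega>. Y \<omega> ^ 2) = 2 * \<xi>^2"
proof -
  have l: "0 < 1/\<xi>" using xi by simp
  show "integrable M (\<lambda>\<omega>. Y \<omega> ^ n)" by (rule erlang_ith_moment_integrable[OF l D])
  show "integrable M Y" using erlang_ith_moment_integrable[OF l D, of 1] by simp
  show "expectation Y = \<xi>" using exponential_distributed_expectation[OF l D] by simp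
  show "expectation (\<lambda>\<omega>. Y \<omega> ^ 2) = 2 * \<xi>^2" using erlang_ith_moment[OF l D, of 2] xi
    by (simp add: power_divide)
qed

lemma (in prob_space) pair_moment:
  assumes ind: "indep_vars (\<lambda>_. borel) X I" and a: "a \<in> I" and b: "b \<in> I"
    and Da: "distributed M lborel (X a) (exponential_density (1/\<xi>a))" and xa: "0 < \<xi>a"
    and Db: "distributed M lborel (X b) (exponential_density (1/\<xi>b))" and xb: "0 < \<xi>b"
    and same: "a = b \<Longrightarrow> \<xi>a = \<xi>b"
  shows "integrable M (\<lambda>\<omega>. X a \<omega> * X b \<omega>)"
    "expectation (\<lambda>\<omega>. X a \<omega> * X b \<omega>) = \<xi>a * \<xi>b + (if a = b then \<xi>a^2 else 0)"
proof -
  have "integrable M (\<lambda>\<omega>. X a \<omega> * X b \<omega>) \<and> expectation (\<lambda>\<omega>. X a \<omega> * X b \<omega>) = \<xi>a * \<xi>b + (if a = b then \<xi>a^2 else 0)"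
  proof (cases "a = b")
    case True
    then show ?thesis using exp_moments(1)[OF Da xa, of 2] exp_moments(4)[OF Da xa] same
      by (simp add: power2_eq_square)
  next
    case False
    have iv: "indep_var borel (X a) borel (X b)" by (rule indep_pair[OF ind a b False])
    show ?thesis using indep_var_lebesgue_integral[OF iv] indep_var_integrable[OF iv]
        exp_moments(2,3)[OF Da xa] exp_moments(2,3)[OF Db xb] False by simp
  qed
  then show "integrable M (\<lambda>\<omega>. X a \<omega> * X b \<omega>)"
    "expectation (\<lambda>\<omega>. X a \<omega> * X b \<omega>) = \<xi>a * \<xi>b + (if a = b then \<xi>a^2 else 0)" by auto
qed

lemma integral_sum2:
  fixes f :: "'i \<Rightarrow> 'j \<Rightarrow> 'a \<Rightarrow> real"
  assumes "\<And>j k. j \<in> A \<Longrightarrow> k \<in> B \<Longrightarrow> integrable M (f j k)"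
  shows "(\<integral>x. (\<Sum>j\<in>A. \<Sum>k\<in>B. f j k x) \<partial>M) = (\<Sum>j\<in>A. \<Sum>k\<in>B. \<integral>x. f j k x \<partial>M)"
    and "integrable M (\<lambda>x. \<Sum>j\<in>A. \<Sum>k\<in>B. f j k x)"
proof -
  have "(\<integral>x. (\<Sum>j\<in>A. \<Sum>k\<in>B. f j k x) \<partial>M) = (\<Sum>j\<in>A. \<integral>x. (\<Sum>k\<in>B. f j k x) \<partial>M)"
    by (rule Bochner_Integration.integral_sum) (auto intro!: Bochner_Integration.integrable_sum assms)
  also have "\<dots> = (\<Sum>j\<in>A. \<Sum>k\<in>B. \<integral>x. f j k x \<partial>M)"
    by (intro sum.cong refl Bochner_Integration.integral_sum) (auto intro: assms)
  finally show "(\<integral>x. (\<Sum>j\<in>A. \<Sum>k\<in>B. f j k x) \<partial>M) = (\<Sum>j\<in>A. \<Sum>k\<in>B. \<integral>x. f j k x \<partial>M)" .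
  show "integrable M (\<lambda>x. \<Sum>j\<in>A. \<Sum>k\<in>B. f j k x)"
    by (auto intro!: Bochner_Integration.integrable_sum assms)
qed



theorem lemma3:
  fixes M :: "'a measure" and X :: "rv \<Rightarrow> 'a \<Rightarrow> real"
    and P Om0 Om1 Om2 PIT PIR w1 w2 :: real
    and OmT OmR :: "nat \<Rightarrow> real" and LT LR :: nat
  assumes "prob_space M"
    and "P > 0" and "Om0 > 0" and "Om1 > 0" and "Om2 > 0"
    and "LT \<ge> 1" and "LR \<ge> 1" and "PIT > 0" and "PIR > 0"
    and "\<forall>k\<in>{1..LT}. OmT k > 0" and "\<forall>k\<in>{1..LR}. OmR k > 0"
    and "inj_on (\<lambda>k. PIT * OmT k) {1..LT}" and "inj_on (\<lambda>k. PIR * OmR k) {1..LR}"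
    and "0 < w1" and "w1 < 1" and "0 < w2" and "w2 < 1" and "w1 + w2 = 1"
    and "prob_space.indep_vars M (\<lambda>_. borel) X
           ({G0, G1, G2} \<union> ITk ` {1..LT} \<union> IRk ` {1..LR})"
    and "distributed M lborel (X G0) (exponential_density (1 / (P * Om0)))"
    and "distributed M lborel (X G1) (exponential_density (1 / (P * Om1)))"
    and "distributed M lborel (X G2) (exponential_density (1 / (P * Om2)))"
    and "\<forall>k\<in>{1..LT}. distributed M lborel (X (ITk k)) (exponential_density (1 / (PIT * OmT k)))"
    and "\<forall>k\<in>{1..LR}. distributed M lborel (X (IRk k)) (exponential_density (1 / (PIR * OmR k)))"
  shows
    "let gb0 = P * Om0; gb1 = P * Om1; gb2 = P * Om2;
         xiT = (\<lambda>k. PIT * OmT k); xiR = (\<lambda>k. PIR * OmR k);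
         GT = (\<lambda>x. \<Sum>k\<in>{1..LT}. X (ITk k) x);
         GR = (\<lambda>x. \<Sum>k\<in>{1..LR}. X (IRk k) x);
         Ups = (\<lambda>x. X G0 x / (GT x + 1)
                   + min (X G1 x / (GT x + 1))
                         (w2 * X G2 x / (GR x + w1 * GT x + w1 + 1)));
         F = (\<lambda>\<gamma>. measure M {x \<in> space M. Ups x < \<gamma>});
         l1 = 1 / gb1 + w1 / (w2 * gb2);
         l2 = 1 / gb1 + (w1 + 1) / (w2 * gb2);
         K = 1 / (2 * gb0) *
             ((\<Sum>j\<in>{1..LT}. \<Sum>k\<in>{1..LR}. phi xiT LT j * phi xiR LR k *
                 (xiR k ^ 2 / (w2 * gb2)) * (xiT j + xiT j ^ 2))
              + (\<Sum>j\<in>{1..LT}. phi xiT LT j *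
                 (l2 * xiT j + (l1 + l2) * xiT j ^ 2 + 2 * l1 * xiT j ^ 3)))
     in (\<lambda>\<gamma>. F \<gamma> - K * \<gamma> ^ 2) \<in> o[at_right 0](\<lambda>\<gamma>. \<gamma> ^ 2)"
proof -
  interpret prob_space M by (rule assms(1))
  define gb0 where "gb0 = P * Om0"
  define gb1 where "gb1 = P * Om1"
  define gb2 where "gb2 = P * Om2"
  define xiT where "xiT = (\<lambda>k. PIT * OmT k)"
  define xiR where "xiR = (\<lambda>k. PIR * OmR k)"
  define GT where "GT = (\<lambda>x. \<Sum>k\<in>{1..LT}. X (ITk k) x)"
  define GR where "GR = (\<lambda>x. \<Sum>k\<in>{1..LR}. X (IRk k) x)"
  define Ups where "Ups = (\<lambda>x. X G0 x / (GT x + 1)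
                   + min (X G1 x / (GT x + 1))
                         (w2 * X G2 x / (GR x + w1 * GT x + w1 + 1)))"
  define F where "F = (\<lambda>\<gamma>. measure M {x \<in> space M. Ups x < \<gamma>})"
  define l1 where "l1 = 1 / gb1 + w1 / (w2 * gb2)"
  define l2 where "l2 = 1 / gb1 + (w1 + 1) / (w2 * gb2)"
  define K where "K = 1 / (2 * gb0) *
             ((\<Sum>j\<in>{1..LT}. \<Sum>k\<in>{1..LR}. phi xiT LT j * phi xiR LR k *
                 (xiR k ^ 2 / (w2 * gb2)) * (xiT j + xiT j ^ 2))
              + (\<Sum>j\<in>{1..LT}. phi xiT LT j *
                 (l2 * xiT j + (l1 + l2) * xiT j ^ 2 + 2 * l1 * xiT j ^ 3)))"
  have main: "(\<lambda>\<gamma>. F \<gamma> - K * \<gamma> ^ 2) \<in> o[at_right 0](\<lambda>\<gamma>. \<gamma> ^ 2)"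
  proof -
  have pos: "0 < gb0" "0 < gb1" "0 < gb2" using assms(2-5) by (simp_all add: gb0_def gb1_def gb2_def)
  have w: "0 < w1" "w1 < 1" "0 < w2" using assms(14,15,16) by auto
  have xiTp: "\<forall>k\<in>{1..LT}. 0 < xiT k" using assms(8,10) by (simp add: xiT_def)
  have xiRp: "\<forall>k\<in>{1..LR}. 0 < xiR k" using assms(9,11) by (simp add: xiR_def)
  define I where "I = {G0, G1, G2} \<union> ITk ` {1..LT} \<union> IRk ` {1..LR}"
  have ind: "indep_vars (\<lambda>_. borel) X I" using assms(19) by (simp add: I_def)
  have D0: "distributed M lborel (X G0) (exponential_density (1 / gb0))" using assms(20) by (simp add: gb0_def)
  have D1: "distributed M lborel (X G1) (exponential_density (1 / gb1))" using assms(21) by (simp add: gb1_def)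
  have D2: "distributed M lborel (X G2) (exponential_density (1 / gb2))" using assms(22) by (simp add: gb2_def)
  have DT: "distributed M lborel (X (ITk k)) (exponential_density (1/xiT k))" if "k \<in> {1..LT}" for k
    using assms(23) that by (simp add: xiT_def)
  have DR: "distributed M lborel (X (IRk k)) (exponential_density (1/xiR k))" if "k \<in> {1..LR}" for k
    using assms(24) that by (simp add: xiR_def)
  have rv[measurable]: "X i \<in> borel_measurable M" if "i \<in> I" for i
    using ind that by (auto simp: indep_vars_def)
  have mGT[measurable]: "GT \<in> borel_measurable M" unfolding GT_def
    by (intro borel_measurable_sum rv) (auto simp: I_def)
  have mGR[measurable]: "GR \<in> borel_measurable M" unfolding GR_def
    by (intro borel_measurable_sum rv) (auto simp: I_def)
  have AEall: "AE \<omega> in M. (\<forall>k\<in>{1..LT}. 0 \<le> X (ITk k) \<omega>) \<and> (\<forall>k\<in>{1..LR}. 0 \<le> X (IRk k) \<omega>)"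
  proof -
    have "AE \<omega> in M. \<forall>k\<in>{1..LT}. 0 \<le> X (ITk k) \<omega>"
      by (rule AE_finite_allI) (auto intro: exp_AE_nonneg[OF DT])
    moreover have "AE \<omega> in M. \<forall>k\<in>{1..LR}. 0 \<le> X (IRk k) \<omega>"
      by (rule AE_finite_allI) (auto intro: exp_AE_nonneg[OF DR])
    ultimately show ?thesis by eventually_elim auto
  qed
  have AEnn: "AE \<omega> in M. 0 \<le> GT \<omega> \<and> 0 \<le> GR \<omega>"
    using AEall by eventually_elim (auto simp: GT_def GR_def intro!: sum_nonneg)
  define bbp where "bbp = (\<lambda>g r. max 0 ((g + 1) / gb1 + (r + w1 * g + w1 + 1) / (w2 * gb2)))"
  define qq where "qq = (\<lambda>\<gamma> \<omega>. \<integral>v. exponential_density (1/gb0) v * (1 - exp (- max (\<gamma> - v / (GT \<omega> + 1)) 0 * bbp (GT \<omega>) (GR \<omega>))) \<partial>lborel)"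
  have Fq: "F \<gamma> = (\<integral>\<omega>. qq \<gamma> \<omega> \<partial>M)" for \<gamma>
    unfolding F_def Ups_def qq_def bbp_def GT_def GR_def
    by (rule Fq_lemma[OF ind I_def D0 D1 D2 pos w(1) w(3)]) (use AEnn in \<open>simp add: GT_def GR_def\<close>)+
  define Phi where "Phi = (\<lambda>\<omega>. (GT \<omega> + 1)/gb0 * ((GT \<omega> + 1)/gb1 + (GR \<omega> + w1 * GT \<omega> + w1 + 1)/(w2*gb2)))"
  define Psi where "Psi = (\<lambda>\<omega>. Phi \<omega> * ((GT \<omega> + 1)/gb0 + ((GT \<omega> + 1)/gb1 + (GR \<omega> + w1 * GT \<omega> + w1 + 1)/(w2*gb2))))"
  have qb: "AE \<omega> in M. Phi \<omega> * \<gamma>^2/2 - Psi \<omega> * \<gamma>^3/6 \<le> qq \<gamma> \<omega> \<and> qq \<gamma> \<omega> \<le> Phi \<omega> * \<gamma>^2/2 \<and> 0 \<le> qq \<gamma> \<omega>"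
    if g0: "0 \<le> \<gamma>" for \<gamma>
    using AEnn
  proof eventually_elim
    case (elim \<omega>)
    have s: "0 < GT \<omega> + 1" using elim by simp
    have bnn: "0 \<le> (GT \<omega> + 1)/gb1 + (GR \<omega> + w1 * GT \<omega> + w1 + 1)/(w2*gb2)"
      using elim pos w by (intro add_nonneg_nonneg divide_nonneg_pos) auto
    have be: "bbp (GT \<omega>) (GR \<omega>) = (GT \<omega> + 1)/gb1 + (GR \<omega> + w1 * GT \<omega> + w1 + 1)/(w2*gb2)"
      using bnn by (simp add: bbp_def)
    have b0: "0 \<le> bbp (GT \<omega>) (GR \<omega>)" by (simp add: bbp_def)
    have qqe: "qq \<gamma> \<omega> = (\<integral>v. exponential_density (1/gb0) v * (1 - exp (- max (\<gamma> - v/(GT \<omega> + 1)) 0 * bbp (GT \<omega>) (GR \<omega>))) \<partial>lborel)"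
      by (simp add: qq_def)
    note Q = qbound[OF s b0 pos(1) g0, folded qqe]
    show ?case using Q unfolding be Phi_def Psi_def
      by (simp add: mult.assoc)
  qed
  define ST where "ST = (\<Sum>k\<in>{1..LT}. xiT k)"
  define QT where "QT = (\<Sum>k\<in>{1..LT}. xiT k ^ 2)"
  define SR where "SR = (\<Sum>k\<in>{1..LR}. xiR k)"
  have memT: "ITk k \<in> I" if "k \<in> {1..LT}" for k using that by (simp add: I_def)
  have memR: "IRk k \<in> I" if "k \<in> {1..LR}" for k using that by (simp add: I_def)
  have iGT: "integrable M GT" unfolding GT_def
    by (rule Bochner_Integration.integrable_sum) (use xiTp exp_moments(2)[OF DT] in auto)
  have eGT: "expectation GT = ST" unfolding GT_def ST_def
    by (subst Bochner_Integration.integral_sum) (use xiTp exp_moments(2,3)[OF DT] in auto)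
  have iGR: "integrable M GR" unfolding GR_def
    by (rule Bochner_Integration.integrable_sum) (use xiRp exp_moments(2)[OF DR] in auto)
  have eGR: "expectation GR = SR" unfolding GR_def SR_def
    by (subst Bochner_Integration.integral_sum) (use xiRp exp_moments(2,3)[OF DR] in auto)
  have GT2: "GT \<omega> ^ 2 = (\<Sum>j\<in>{1..LT}. \<Sum>k\<in>{1..LT}. X (ITk j) \<omega> * X (ITk k) \<omega>)" for \<omega>
    unfolding GT_def power2_eq_square sum_product ..
  have GTR: "GT \<omega> * GR \<omega> = (\<Sum>j\<in>{1..LT}. \<Sum>k\<in>{1..LR}. X (ITk j) \<omega> * X (IRk k) \<omega>)" for \<omega>
    unfolding GT_def GR_def sum_product ..
  have pTT: "integrable M (\<lambda>\<omega>. X (ITk j) \<omega> * X (ITk k) \<omega>) \<and>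
      expectation (\<lambda>\<omega>. X (ITk j) \<omega> * X (ITk k) \<omega>) = xiT j * xiT k + (if j = k then xiT j ^ 2 else 0)"
    if "j \<in> {1..LT}" "k \<in> {1..LT}" for j k
    using pair_moment[OF ind memT[OF that(1)] memT[OF that(2)] DT[OF that(1)] _ DT[OF that(2)]] xiTp that by auto
  have pTR: "integrable M (\<lambda>\<omega>. X (ITk j) \<omega> * X (IRk k) \<omega>) \<and>
      expectation (\<lambda>\<omega>. X (ITk j) \<omega> * X (IRk k) \<omega>) = xiT j * xiR k"
    if "j \<in> {1..LT}" "k \<in> {1..LR}" for j k
    using pair_moment[OF ind memT[OF that(1)] memR[OF that(2)] DT[OF that(1)] _ DR[OF that(2)]] xiTp xiRp that by auto
  have iGT2: "integrable M (\<lambda>\<omega>. GT \<omega> ^ 2)" unfolding GT2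
    by (intro Bochner_Integration.integrable_sum) (use pTT in auto)
  have eGT2: "expectation (\<lambda>\<omega>. GT \<omega> ^ 2) = ST^2 + QT"
  proof -
    have "expectation (\<lambda>\<omega>. GT \<omega> ^ 2) = (\<Sum>j\<in>{1..LT}. \<Sum>k\<in>{1..LT}. xiT j * xiT k + (if j = k then xiT j ^ 2 else 0))"
      unfolding GT2 using pTT by (subst integral_sum2[where f="\<lambda>j k \<omega>. X (ITk j) \<omega> * X (ITk k) \<omega>"]) auto
    also have "\<dots> = ST^2 + QT"
      by (simp add: sum.distrib ST_def QT_def power2_eq_square sum_product)
    finally show ?thesis .
  qed
  have iGTR: "integrable M (\<lambda>\<omega>. GT \<omega> * GR \<omega>)" unfolding GTR
    by (intro Bochner_Integration.integrable_sum) (use pTR in auto)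
  have eGTR: "expectation (\<lambda>\<omega>. GT \<omega> * GR \<omega>) = ST * SR"
  proof -
    have "expectation (\<lambda>\<omega>. GT \<omega> * GR \<omega>) = (\<Sum>j\<in>{1..LT}. \<Sum>k\<in>{1..LR}. xiT j * xiR k)"
      unfolding GTR using pTR by (subst integral_sum2[where f="\<lambda>j k \<omega>. X (ITk j) \<omega> * X (IRk k) \<omega>"]) auto
    also have "\<dots> = ST * SR" by (simp add: ST_def SR_def sum_product)
    finally show ?thesis .
  qed
  define \<alpha> where "\<alpha> = 1/(gb0*gb1) + w1/(gb0*w2*gb2)"
  define \<beta> where "\<beta> = 2/(gb0*gb1) + (2*w1+1)/(gb0*w2*gb2)"
  define \<delta> where "\<delta> = 1/(gb0*w2*gb2)"
  define \<zeta> where "\<zeta> = 1/(gb0*gb1) + (w1+1)/(gb0*w2*gb2)"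
  have Phi_eq: "Phi = (\<lambda>\<omega>. \<alpha> * GT \<omega> ^ 2 + \<beta> * GT \<omega> + \<delta> * GR \<omega> + \<delta> * (GT \<omega> * GR \<omega>) + \<zeta>)"
    using pos w by (auto simp: Phi_def \<alpha>_def \<beta>_def \<delta>_def \<zeta>_def field_simps power2_eq_square)
  have iPhi: "integrable M Phi" unfolding Phi_eq using iGT2 iGT iGR iGTR by auto
  have ePhi0: "expectation Phi = \<alpha> * (ST^2 + QT) + \<beta> * ST + \<delta> * SR + \<delta> * (ST * SR) + \<zeta>"
    unfolding Phi_eq using iGT2 iGT iGR iGTR eGT2 eGT eGR eGTR by (simp add: prob_space)
  have pT: "(\<Sum>k\<in>{1..LT}. phi xiT LT k * xiT k) = 1" "(\<Sum>k\<in>{1..LT}. phi xiT LT k * xiT k ^ 2) = ST"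
      "(\<Sum>k\<in>{1..LT}. phi xiT LT k * xiT k ^ 3) = (ST^2 + QT) / 2"
    using phi_moments[OF assms(6) xiTp assms(12)[folded xiT_def]] by (simp_all add: ST_def QT_def)
  have pR: "(\<Sum>k\<in>{1..LR}. phi xiR LR k * xiR k ^ 2) = SR"
    using phi_moments(2)[OF assms(7) xiRp assms(13)[folded xiR_def]] by (simp add: SR_def)
  have DS: "(\<Sum>j\<in>{1..LT}. \<Sum>k\<in>{1..LR}. phi xiT LT j * phi xiR LR k * (xiR k ^ 2 / (w2 * gb2)) * (xiT j + xiT j ^ 2))
      = (1 + ST) * SR / (w2 * gb2)"
  proof -
    have "(\<Sum>j\<in>{1..LT}. \<Sum>k\<in>{1..LR}. phi xiT LT j * phi xiR LR k * (xiR k ^ 2 / (w2 * gb2)) * (xiT j + xiT j ^ 2))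
      = (\<Sum>j\<in>{1..LT}. \<Sum>k\<in>{1..LR}. (phi xiT LT j * xiT j + phi xiT LT j * xiT j ^ 2) * (phi xiR LR k * xiR k ^ 2) / (w2 * gb2))"
      by (intro sum.cong refl) (simp add: algebra_simps)
    also have "\<dots> = (\<Sum>j\<in>{1..LT}. (phi xiT LT j * xiT j + phi xiT LT j * xiT j ^ 2)) * (\<Sum>k\<in>{1..LR}. phi xiR LR k * xiR k ^ 2) / (w2 * gb2)"
      by (simp add: sum_product sum_divide_distrib)
    also have "\<dots> = (1 + ST) * SR / (w2 * gb2)"
      using pT pR by (simp add: sum.distrib)
    finally show ?thesis .
  qed
  have SS: "(\<Sum>j\<in>{1..LT}. phi xiT LT j * (l2 * xiT j + (l1 + l2) * xiT j ^ 2 + 2 * l1 * xiT j ^ 3))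
      = l2 + (l1 + l2) * ST + l1 * (ST^2 + QT)"
  proof -
    have "(\<Sum>j\<in>{1..LT}. phi xiT LT j * (l2 * xiT j + (l1 + l2) * xiT j ^ 2 + 2 * l1 * xiT j ^ 3))
      = l2 * (\<Sum>j\<in>{1..LT}. phi xiT LT j * xiT j) + (l1 + l2) * (\<Sum>j\<in>{1..LT}. phi xiT LT j * xiT j ^ 2)
        + 2 * l1 * (\<Sum>j\<in>{1..LT}. phi xiT LT j * xiT j ^ 3)"
      by (simp add: sum.distrib sum_distrib_left algebra_simps)
    then show ?thesis using pT by simp
  qed
  have Ke: "K = 1/(2*gb0) * ((1 + ST) * SR / (w2 * gb2) + (l2 + (l1 + l2) * ST + l1 * (ST^2 + QT)))"
    unfolding K_def DS SS ..
  have ePhi: "expectation Phi = 2 * K"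
    unfolding ePhi0 Ke l1_def l2_def \<alpha>_def \<beta>_def \<delta>_def \<zeta>_def
    using pos w by (simp add: field_simps power2_eq_square)
  define ca where "ca = 1/gb0"
  define cb where "cb = 1/gb1 + 2/(w2*gb2)"
  define Dm where "Dm = (\<lambda>\<omega>. ca * cb * (ca + cb) * (27 * (1 + real LT ^ 3 * (\<Sum>k\<in>{1..LT}. X (ITk k) \<omega> ^ 3)
                         + real LR ^ 3 * (\<Sum>k\<in>{1..LR}. X (IRk k) \<omega> ^ 3))))"
  have iDm: "integrable M Dm"
  proof -
    have "integrable M (\<lambda>\<omega>. \<Sum>k\<in>{1..LT}. X (ITk k) \<omega> ^ 3)"
      by (rule Bochner_Integration.integrable_sum) (use xiTp exp_moments(1)[OF DT] in auto)
    moreover have "integrable M (\<lambda>\<omega>. \<Sum>k\<in>{1..LR}. X (IRk k) \<omega> ^ 3)"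
      by (rule Bochner_Integration.integrable_sum) (use xiRp exp_moments(1)[OF DR] in auto)
    ultimately show ?thesis unfolding Dm_def by auto
  qed
  have mPsi[measurable]: "Psi \<in> borel_measurable M" unfolding Psi_def Phi_def by measurable
  have Psi_bd: "AE \<omega> in M. 0 \<le> Psi \<omega> \<and> Psi \<omega> \<le> Dm \<omega>"
    using AEall
  proof eventually_elim
    case (elim \<omega>)
    define g where "g = GT \<omega>"
    define r where "r = GR \<omega>"
    have g0: "0 \<le> g" and r0: "0 \<le> r" using elim by (auto simp: g_def r_def GT_def GR_def intro!: sum_nonneg)
    define S where "S = 1 + g + r"
    define a where "a = (g + 1)/gb0"
    define b where "b = (g + 1)/gb1 + (r + w1 * g + w1 + 1)/(w2*gb2)"
    have Psie: "Psi \<omega> = a * b * (a + b)" by (simp add: Psi_def Phi_def a_def b_def g_def r_def)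
    have a0: "0 \<le> a" using g0 pos by (simp add: a_def)
    have b0: "0 \<le> b" using g0 r0 pos w unfolding b_def by (intro add_nonneg_nonneg divide_nonneg_pos) auto
    have aS: "a \<le> ca * S" using r0 pos by (simp add: a_def ca_def S_def divide_right_mono)
    have bS: "b \<le> cb * S"
    proof -
      have "w1 * g \<le> g" using g0 w by (simp add: mult_left_le_one_le)
      then have "r + w1 * g + w1 + 1 \<le> 2 * S" using w g0 r0 by (simp add: S_def)
      then have "(r + w1 * g + w1 + 1)/(w2*gb2) \<le> 2 * S / (w2*gb2)" using pos w by (intro divide_right_mono) auto
      moreover have "(g + 1)/gb1 \<le> S / gb1" using r0 pos by (simp add: S_def divide_right_mono)
      ultimately show ?thesis by (simp add: b_def cb_def algebra_simps)
    qed
    have t1: "a * b * (a + b) \<le> (ca * S) * (cb * S) * (ca * S + cb * S)"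
      using a0 b0 aS bS by (intro mult_mono add_mono) auto
    have t1': "(ca * S) * (cb * S) * (ca * S + cb * S) = ca * cb * (ca + cb) * S^3"
      by (simp add: algebra_simps power3_eq_cube)
    have t2: "S^3 \<le> 27 * (1 + g^3 + r^3)" unfolding S_def by (rule cube3[OF g0 r0])
    have t3: "g^3 \<le> real LT ^ 3 * (\<Sum>k\<in>{1..LT}. X (ITk k) \<omega> ^ 3)"
      using sum_cube_le[of "{1..LT}" "\<lambda>k. X (ITk k) \<omega>"] elim by (simp add: g_def GT_def)
    have t4: "r^3 \<le> real LR ^ 3 * (\<Sum>k\<in>{1..LR}. X (IRk k) \<omega> ^ 3)"
      using sum_cube_le[of "{1..LR}" "\<lambda>k. X (IRk k) \<omega>"] elim by (simp add: r_def GR_def)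
    have t5: "S^3 \<le> 27 * (1 + real LT ^ 3 * (\<Sum>k\<in>{1..LT}. X (ITk k) \<omega> ^ 3) + real LR ^ 3 * (\<Sum>k\<in>{1..LR}. X (IRk k) \<omega> ^ 3))"
    proof -
      have "1 + g^3 + r^3 \<le> 1 + real LT ^ 3 * (\<Sum>k\<in>{1..LT}. X (ITk k) \<omega> ^ 3) + real LR ^ 3 * (\<Sum>k\<in>{1..LR}. X (IRk k) \<omega> ^ 3)"
        using t3 t4 by (rule add_mono[OF add_mono[OF order_refl]])
      then show ?thesis using t2 by simp
    qed
    have c0: "0 \<le> ca * cb * (ca + cb)" using pos w by (simp add: ca_def cb_def)
    have "a * b * (a + b) \<le> Dm \<omega>"
      using t1 t1' mult_left_mono[OF t5 c0] by (simp add: Dm_def)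
    then show ?case using a0 b0 Psie by simp
  qed
  have iPsi: "integrable M Psi"
    by (rule Bochner_Integration.integrable_bound[OF iDm mPsi]) (use Psi_bd in \<open>auto elim!: AE_mp\<close>)
  have mqq[measurable]: "(\<lambda>\<omega>. qq \<gamma> \<omega>) \<in> borel_measurable M" for \<gamma>
    unfolding qq_def bbp_def by (rule lborel.borel_measurable_lebesgue_integral) measurable
  have bound: "\<bar>F \<gamma> - K * \<gamma>^2\<bar> \<le> (expectation Psi / 6) * \<gamma>^3" if g0: "0 < \<gamma>" for \<gamma>
  proof -
    have qb': "AE \<omega> in M. Phi \<omega> * \<gamma>^2/2 - Psi \<omega> * \<gamma>^3/6 \<le> qq \<gamma> \<omega> \<and> qq \<gamma> \<omega> \<le> Phi \<omega> * \<gamma>^2/2 \<and> 0 \<le> qq \<gamma> \<omega>"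
      using qb g0 by simp
    have iP2: "integrable M (\<lambda>\<omega>. Phi \<omega> * \<gamma>^2/2)" using iPhi by simp
    have iq: "integrable M (qq \<gamma>)"
    proof (rule Bochner_Integration.integrable_bound[OF iP2])
      show "qq \<gamma> \<in> borel_measurable M" using mqq[of \<gamma>] by simp
      show "AE x in M. norm (qq \<gamma> x) \<le> norm (Phi x * \<gamma>^2/2)"
        using qb' by eventually_elim auto
    qed
    have iD: "integrable M (\<lambda>\<omega>. qq \<gamma> \<omega> - Phi \<omega> * \<gamma>^2/2)" using iq iP2 by auto
    have e: "F \<gamma> - K * \<gamma>^2 = (\<integral>\<omega>. (qq \<gamma> \<omega> - Phi \<omega> * \<gamma>^2/2) \<partial>M)"
    proof -
      have "(\<integral>\<omega>. (qq \<gamma> \<omega> - Phi \<omega> * \<gamma>^2/2) \<partial>M) = (\<integral>\<omega>. qq \<gamma> \<omega> \<partial>M) - (\<integral>\<omega>. Phi \<omega> * \<gamma>^2/2 \<partial>M)"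
        using iq iP2 by (rule Bochner_Integration.integral_diff)
      also have "(\<integral>\<omega>. Phi \<omega> * \<gamma>^2/2 \<partial>M) = expectation Phi * \<gamma>^2/2" by simp
      finally show ?thesis using Fq[of \<gamma>] ePhi by simp
    qed
    have up: "(\<integral>\<omega>. (qq \<gamma> \<omega> - Phi \<omega> * \<gamma>^2/2) \<partial>M) \<le> (\<integral>\<omega>. 0 \<partial>M)"
      by (rule Bochner_Integration.integral_mono_AE[OF iD]) (use qb' in \<open>auto elim!: AE_mp\<close>)
    have iPs: "integrable M (\<lambda>\<omega>. - (Psi \<omega> * \<gamma>^3/6))" using iPsi by simp
    have lo: "(\<integral>\<omega>. - (Psi \<omega> * \<gamma>^3/6) \<partial>M) \<le> (\<integral>\<omega>. (qq \<gamma> \<omega> - Phi \<omega> * \<gamma>^2/2) \<partial>M)"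
      by (rule Bochner_Integration.integral_mono_AE[OF iPs iD]) (use qb' in \<open>auto elim!: AE_mp\<close>)
    have "(\<integral>\<omega>. - (Psi \<omega> * \<gamma>^3/6) \<partial>M) = - (expectation Psi / 6 * \<gamma>^3)" by simp
    then show ?thesis using e up lo by (simp add: abs_le_iff)
  qed
  show ?thesis
    by (rule o_from_cubic[where C="expectation Psi / 6"]) (use bound in auto)
  qed
  show ?thesis unfolding Let_def
    using main[unfolded F_def K_def l1_def l2_def Ups_def GT_def GR_def xiT_def xiR_def gb0_def gb1_def gb2_def] .
qed


end
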